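(* Let $n\geq 1$ and let $C_n\subset A^n$ be an arbitrary nonempty set. Write $D=E_{P^n}[\rho_n(X_1^n,C_n)]$, where $X_1^n=(X_1,\dots,X_n)$ has the product distribution $P^n$. Then $$\frac{1}{n}\log M^n(C_n)\geq R(D).$$
   Context: Setting: $A$ is a finite set; $P$ is a probability mass function on $A$ with $P(a)>0$ for all $a\in A$; $\rho:A\times A\to[0,\infty)$ is a function such that for each $a\in A$ there is $b\in A$ with $\rho(a,b)=0$; $M:A\to(0,\infty)$ is an arbitrary positive "mass" function. For $n\geq1$ and $x_1^n=(x_1,\dots,x_n),y_1^n\in A^n$, $\rho_n(x_1^n,y_1^n)=\frac1n\sum_{i=1}^n\rho(x_i,y_i)$; $M^n(y_1^n)=\prod_{i=1}^n M(y_i)$ and $M^n(C)=\sum_{y_1^n\in C}M^n(y_1^n)$ for $C\subset A^n$; $P^n$ is the product distribution on $A^n$. For $C\subset A^n$, $\rho_n(x_1^n,C)=\min_{y_1^n\in C}\rho_n(x_1^n,y_1^n)$. Logarithms are natural. For probability mass functions $\mu,\nu$ on a finite set $S$, $H(\mu\|\nu)=\sum_s\mu(s)\log\frac{\mu(s)}{\nu(s)}$. For a probability measure $Q$ on $A$ and $D\geq0$, ${\cal M}(P,Q,D)$ is the set of probability measures $W$ on $A\times A$ with first marginal $P$, second marginal $Q$, and $E_W[\rho(X,Y)]\leq D$; $I(P,Q,D)=\inf_{W\in{\cal M}(P,Q,D)}H(W\|P\times Q)$ (equal to $+\infty$ if the set is empty). The rate function is $R(D)=R(D;P,M)=\inf_Q\{I(P,Q,D)+E_Q[\log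 M(Y)]\}$, the infimum over all probability distributions $Q$ on $A$; equivalently $R(D)=\inf\{I(X;Y)+E[\log M(Y)]\}$ over jointly distributed $(X,Y)$ with $X\sim P$ and $E\rho(X,Y)\le D$, where $I(X;Y)$ is mutual information. *)

theory Defs
  imports "HOL-Analysis.Analysis"
begin

text \<open>Probability mass functions on a finite carrier set S, represented as real-valued functions
  (values outside S are irrelevant).\<close>
definition is_pmf_on :: "'b set \<Rightarrow> ('b \<Rightarrow> real) \<Rightarrow> bool" where
  "is_pmf_on S \<mu> \<longleftrightarrow> (\<forall>s\<in>S. 0 \<le> \<mu> s) \<and> (\<Sum>s\<in>S. \<mu> s) = 1"

definition rel_entropy :: "'b set \<Rightarrow> ('b \<Rightarrow> real) \<Rightarrow> ('b \<Rightarrow> real) \<Rightarrow> real" where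
  "rel_entropy S \<mu> \<nu> = (\<Sum>s\<in>S. if \<mu> s = 0 then 0 else \<mu> s * ln (\<mu> s / \<nu> s))"

definition couplings :: "'a set \<Rightarrow> ('a \<Rightarrow> 'a \<Rightarrow> real) \<Rightarrow> ('a \<Rightarrow> real) \<Rightarrow> ('a \<Rightarrow> real) \<Rightarrow> real
    \<Rightarrow> ('a \<times> 'a \<Rightarrow> real) set" where
  "couplings A \<rho> P Q D = {W. is_pmf_on (A \<times> A) W
      \<and> (\<forall>a\<in>A. (\<Sum>b\<in>A. W (a, b)) = P a)
      \<and> (\<forall>b\<in>A. (\<Sum>a\<in>A. W (a, b)) = Q b)
      \<and> (\<Sum>p\<in>A \<times> A. W p * \<rho> (fst p) (snd p)) \<le> D}"

text \<open>I(P,Q,D) = inf over couplings of H(W || P x Q); +infinity if there is no coupling.\<close>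
definition I_PQD :: "'a set \<Rightarrow> ('a \<Rightarrow> 'a \<Rightarrow> real) \<Rightarrow> ('a \<Rightarrow> real) \<Rightarrow> ('a \<Rightarrow> real) \<Rightarrow> real \<Rightarrow> ereal" where
  "I_PQD A \<rho> P Q D = Inf ((\<lambda>W. ereal (rel_entropy (A \<times> A) W (\<lambda>p. P (fst p) * Q (snd p))))
                              ` couplings A \<rho> P Q D)"

definition rate_fun :: "'a set \<Rightarrow> ('a \<Rightarrow> 'a \<Rightarrow> real) \<Rightarrow> ('a \<Rightarrow> real) \<Rightarrow> ('a \<Rightarrow> real) \<Rightarrow> real \<Rightarrow> ereal" where
  "rate_fun A \<rho> P M D = (INF Q \<in> {Q. is_pmf_on A Q}.
       I_PQD A \<rho> P Q D + ereal (\<Sum>b\<in>A. Q b * ln (M b)))"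

definition words :: "'a set \<Rightarrow> nat \<Rightarrow> (nat \<Rightarrow> 'a) set" where
  "words A n = PiE {..<n} (\<lambda>_. A)"

definition rho_n :: "('a \<Rightarrow> 'a \<Rightarrow> real) \<Rightarrow> nat \<Rightarrow> (nat \<Rightarrow> 'a) \<Rightarrow> (nat \<Rightarrow> 'a) \<Rightarrow> real" where
  "rho_n \<rho> n x y = (1 / real n) * (\<Sum>i<n. \<rho> (x i) (y i))"

definition rho_n_set :: "('a \<Rightarrow> 'a \<Rightarrow> real) \<Rightarrow> nat \<Rightarrow> (nat \<Rightarrow> 'a) \<Rightarrow> (nat \<Rightarrow> 'a) set \<Rightarrow> real" where
  "rho_n_set \<rho> n x C = Min ((\<lambda>y. rho_n \<rho> n x y) ` C)"

definition prod_n :: "('a \<Rightarrow> real) \<Rightarrow> nat \<Rightarrow> (nat \<Rightarrow> 'a) \<Rightarrow> real" where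
  "prod_n M n y = (\<Prod>i<n. M (y i))"

definition mass_n :: "('a \<Rightarrow> real) \<Rightarrow> nat \<Rightarrow> (nat \<Rightarrow> 'a) set \<Rightarrow> real" where
  "mass_n M n C = (\<Sum>y\<in>C. prod_n M n y)"

definition avg_dist :: "'a set \<Rightarrow> ('a \<Rightarrow> 'a \<Rightarrow> real) \<Rightarrow> ('a \<Rightarrow> real) \<Rightarrow> nat \<Rightarrow> (nat \<Rightarrow> 'a) set \<Rightarrow> real" where
  "avg_dist A \<rho> P n C = (\<Sum>x\<in>words A n. prod_n P n x * rho_n_set \<rho> n x C)"

end

theory Submission
  imports Defs
begin

definition ent :: "real \<Rightarrow> real \<Rightarrow> real" where
  "ent w u = (if w = 0 then 0 else w * ln (w / u))"

lemma ent_term: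
  fixes w u SW SU :: real
  assumes "0 \<le> w" "0 \<le> u" "w > 0 \<longrightarrow> u > 0" "SW > 0" "SU > 0"
  shows "w * ln (SW / SU) + w - u * (SW / SU) \<le> ent w u"
proof (cases "w = 0")
  case True thus ?thesis using assms by (simp add: ent_def)
next
  case False
  then have w: "w > 0" using assms by simp
  then have u: "u > 0" using assms by simp
  have "ln ((u * SW) / (w * SU)) \<le> (u * SW) / (w * SU) - 1"
    by (rule ln_le_minus_one) (use w u assms in simp)
  then have "w * ln ((u * SW) / (w * SU)) \<le> w * ((u * SW) / (w * SU) - 1)"
    using w by (simp add: mult_left_mono)
  also have "w * ((u * SW) / (w * SU) - 1) = u * (SW / SU) - w" using w assms by (simp add: field_simps)
  also have "ln ((u * SW) / (w * SU)) = ln (SW / SU) - ln (w / u)"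
    using w u assms by (simp add: ln_div ln_mult)
  finally show ?thesis using False by (simp add: ent_def algebra_simps)
qed

lemma logsum:
  fixes w u :: "'i \<Rightarrow> real"
  assumes I: "finite I" and w: "\<forall>i\<in>I. 0 \<le> w i" and u: "\<forall>i\<in>I. 0 \<le> u i"
    and wu: "\<forall>i\<in>I. w i > 0 \<longrightarrow> u i > 0"
  shows "ent (sum w I) (sum u I) \<le> (\<Sum>i\<in>I. ent (w i) (u i))"
proof (cases "sum w I = 0")
  case True
  then have "\<forall>i\<in>I. w i = 0" using sum_nonneg_eq_0_iff[OF I] w by blast
  then show ?thesis using True by (simp add: ent_def)
next
  case False
  define SW where "SW = sum w I"
  define SU where "SU = sum u I"
  have SW: "SW > 0" using False w unfolding SW_def by (simp add: sum_nonneg order_less_le)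
  obtain j where j: "j \<in> I" "w j > 0" using False w by (metis less_eq_real_def sum.neutral)
  have SU: "SU > 0" unfolding SU_def
    using j wu u by (metis I sum_pos2)
  have "(\<Sum>i\<in>I. w i * ln (SW / SU) + w i - u i * (SW / SU)) \<le> (\<Sum>i\<in>I. ent (w i) (u i))"
    by (rule sum_mono) (use ent_term w u wu SW SU in auto)
  also have "(\<Sum>i\<in>I. w i * ln (SW / SU) + w i - u i * (SW / SU)) = SW * ln (SW / SU) + SW - SU * (SW / SU)"
    unfolding SW_def SU_def by (simp add: sum.distrib sum_subtractf sum_distrib_right sum_divide_distrib)
  also have "\<dots> = ent SW SU" using SW SU by (simp add: ent_def)
  finally show ?thesis unfolding SW_def SU_def .
qed

lemma fiber_sum:
  fixes w :: "'s \<Rightarrow> real"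
  assumes "finite S" "finite T" "\<phi> ` S \<subseteq> T"
  shows "(\<Sum>t\<in>T. (\<Sum>s\<in>{s\<in>S. \<phi> s = t}. w s) * h t) = (\<Sum>s\<in>S. w s * h (\<phi> s))"
proof -
  have "(\<Sum>s\<in>S. w s * h (\<phi> s)) = (\<Sum>t\<in>T. \<Sum>s\<in>{s. s\<in>S \<and> \<phi> s = t}. w s * h (\<phi> s))"
    using sum.group[OF assms, of "\<lambda>s. w s * h (\<phi> s)"] by simp
  also have "\<dots> = (\<Sum>t\<in>T. (\<Sum>s\<in>{s\<in>S. \<phi> s = t}. w s) * h t)"
    by (auto simp: sum_distrib_right intro!: sum.cong)
  finally show ?thesis by simp
qed

lemma fiber_sum1:
  fixes w :: "'s \<Rightarrow> real"
  assumes "finite S" "finite T" "\<phi> ` S \<subseteq> T"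
  shows "(\<Sum>t\<in>T. (\<Sum>s\<in>{s\<in>S. \<phi> s = t}. w s)) = (\<Sum>s\<in>S. w s)"
  using fiber_sum[OF assms, of w "\<lambda>_. 1"] by simp

lemma finite_words: "finite A \<Longrightarrow> finite (words A n)"
  unfolding words_def by (simp add: finite_PiE)

lemma sum_words_prod:
  fixes f :: "nat \<Rightarrow> 'a \<Rightarrow> real"
  assumes "finite A"
  shows "(\<Sum>x\<in>words A n. \<Prod>i<n. f i (x i)) = (\<Prod>i<n. \<Sum>a\<in>A. f i a)"
  unfolding words_def using prod_sum_PiE[of "{..<n}" "\<lambda>_. A" f] assms by simp

lemma marg_total:
  assumes "finite A" "is_pmf_on A P"
  shows "(\<Sum>x\<in>words A n. prod_n P n x) = 1"
  using sum_words_prod[OF assms(1), of "\<lambda>_. P" n] assms(2)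
  unfolding prod_n_def is_pmf_on_def by simp

lemma marg_i:
  assumes "finite A" "is_pmf_on A P" "i < n" "a \<in> A"
  shows "(\<Sum>x\<in>{x\<in>words A n. x i = a}. prod_n P n x) = P a"
proof -
  define f where "f j c = (if j = i then (if c = a then P c else 0) else P c)" for j c
  have "(\<Sum>x\<in>{x\<in>words A n. x i = a}. prod_n P n x) = (\<Sum>x\<in>words A n. if x i = a then prod_n P n x else 0)"
    using assms(1) by (simp add: sum.If_cases finite_words Int_def)
  also have "\<dots> = (\<Sum>x\<in>words A n. \<Prod>j<n. f j (x j))"
  proof (rule sum.cong[OF refl])
    fix x assume "x \<in> words A n"
    show "(if x i = a then prod_n P n x else 0) = (\<Prod>j<n. f j (x j))"
    proof (cases "x i = a")
      case True
      have "(\<Prod>j<n. f j (x j)) = (\<Prod>j<n. P (x j))" unfolding f_def using True by (intro prod.cong) auto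
      thus ?thesis using True unfolding prod_n_def by simp
    next
      case False
      then have "f i (x i) = 0" unfolding f_def by simp
      then show ?thesis using False assms(3) by (simp add: prod_zero_iff[of "{..<n}"] ; metis lessThan_iff)
    qed
  qed
  also have "\<dots> = (\<Prod>j<n. \<Sum>c\<in>A. f j c)" by (rule sum_words_prod[OF assms(1)])
  also have "\<dots> = (\<Prod>j<n. if j = i then P a else 1)"
    using assms unfolding f_def is_pmf_on_def by (intro prod.cong) (auto simp: sum.delta)
  also have "\<dots> = P a" using assms(3) by (simp add: prod.delta)
  finally show ?thesis .
qed


lemma ent_eq: "ent w u = w * ln (w / u)" by (simp add: ent_def)

lemma ent_scale: "c > 0 \<Longrightarrow> ent (c * x) (c * y) = c * ent x y"
  by (simp add: ent_def)

theorem theorem1: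
  fixes A :: "'a set" and P :: "'a \<Rightarrow> real" and \<rho> :: "'a \<Rightarrow> 'a \<Rightarrow> real"
    and M :: "'a \<Rightarrow> real" and n :: nat and C :: "(nat \<Rightarrow> 'a) set"
  assumes "finite A"
    and "is_pmf_on A P" and "\<forall>a\<in>A. P a > 0"
    and "\<forall>a\<in>A. \<forall>b\<in>A. \<rho> a b \<ge> 0"
    and "\<forall>a\<in>A. \<exists>b\<in>A. \<rho> a b = 0"
    and "\<forall>a\<in>A. M a > 0"
    and "n \<ge> 1"
    and "C \<subseteq> words A n" and "C \<noteq> {}"
  shows "ereal ((1 / real n) * ln (mass_n M n C)) \<ge> rate_fun A \<rho> P M (avg_dist A \<rho> P n C)"
proof -
  note fA = assms(1) and pmfP = assms(2) and Ppos = assms(3) and Mpos = assms(6)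
  have npos: "real n > 0" using assms(7) by simp
  define W where "W = words A n"
  have fW: "finite W" using finite_words[OF fA] W_def by simp
  have CW: "C \<subseteq> W" using assms(8) W_def by simp
  have fC: "finite C" using fW CW finite_subset by auto
  have Wi_mem: "x i \<in> A" if "x \<in> W" "i < n" for x i
    using that unfolding W_def words_def by (auto simp: PiE_iff)
  define f where "f x = (SOME y. y \<in> C \<and> rho_n \<rho> n x y = rho_n_set \<rho> n x C)" for x
  have f: "f x \<in> C \<and> rho_n \<rho> n x (f x) = rho_n_set \<rho> n x C" for x
  proof -
    have "rho_n_set \<rho> n x C \<in> (\<lambda>y. rho_n \<rho> n x y) ` C" unfolding rho_n_set_def
      using fC assms(9) by (intro Min_in) auto
    then have "\<exists>y. y \<in> C \<and> rho_n \<rho> n x y = rho_n_set \<rho> n x C" by auto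
    then show ?thesis unfolding f_def by (rule someI_ex)
  qed
  have fA': "f x i \<in> A" if "i < n" for x i using f[of x] CW Wi_mem that by blast
  define p where "p x = prod_n P n x" for x
  have ppos: "p x > 0" if "x \<in> W" for x
    unfolding p_def prod_n_def using that Wi_mem Ppos by (intro prod_pos) auto
  have pnn: "p x \<ge> 0" if "x \<in> W" for x using ppos[OF that] by simp
  have psum: "(\<Sum>x\<in>W. p x) = 1" unfolding p_def W_def by (rule marg_total[OF fA pmfP])
  define Wi where "Wi i ab = (\<Sum>x\<in>{x\<in>W. (x i, f x i) = ab}. p x)" for i ab
  define Qi where "Qi i b = (\<Sum>x\<in>{x\<in>W. f x i = b}. p x)" for i b
  define Wb where "Wb ab = (1 / real n) * (\<Sum>i<n. Wi i ab)" for ab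
  define Qb where "Qb b = (1 / real n) * (\<Sum>i<n. Qi i b)" for b
  have Winn: "Wi i ab \<ge> 0" for i ab unfolding Wi_def using pnn by (intro sum_nonneg) auto
  have Qinn: "Qi i b \<ge> 0" for i b unfolding Qi_def using pnn by (intro sum_nonneg) auto
  have WQ: "Wi i (a, b) \<le> Qi i b" for i a b unfolding Wi_def Qi_def
    using pnn fW by (intro sum_mono2) auto
  have F1: "(\<Sum>b\<in>A. Wi i (a, b)) = P a" if "i < n" "a \<in> A" for i a
  proof -
    have "(\<Sum>b\<in>A. Wi i (a, b)) = (\<Sum>b\<in>A. \<Sum>x\<in>{x\<in>{x\<in>W. x i = a}. f x i = b}. p x)"
      unfolding Wi_def by (intro sum.cong refl arg_cong2[where f=sum]) auto
    also have "\<dots> = (\<Sum>x\<in>{x\<in>W. x i = a}. p x)"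
      by (rule fiber_sum1) (use fW fA fA' that in auto)
    also have "\<dots> = P a" unfolding p_def W_def by (rule marg_i[OF fA pmfP that])
    finally show ?thesis .
  qed
  have F2: "(\<Sum>a\<in>A. Wi i (a, b)) = Qi i b" if "i < n" for i b
  proof -
    have "(\<Sum>a\<in>A. Wi i (a, b)) = (\<Sum>a\<in>A. \<Sum>x\<in>{x\<in>{x\<in>W. f x i = b}. x i = a}. p x)"
      unfolding Wi_def by (intro sum.cong refl arg_cong2[where f=sum]) auto
    also have "\<dots> = Qi i b" unfolding Qi_def
      by (rule fiber_sum1) (use fW fA Wi_mem that in auto)
    finally show ?thesis .
  qed
  have F4: "(\<Sum>ab\<in>A\<times>A. Wi i ab * h ab) = (\<Sum>x\<in>W. p x * h (x i, f x i))" if "i < n" for i h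
    unfolding Wi_def by (rule fiber_sum) (use fW fA Wi_mem fA' that in auto)
  have F5: "(\<Sum>b\<in>A. Qi i b * h b) = (\<Sum>x\<in>W. p x * h (f x i))" if "i < n" for i h
    unfolding Qi_def by (rule fiber_sum) (use fW fA fA' that in auto)
  have F3: "(\<Sum>b\<in>A. Qi i b) = 1" if "i < n" for i
    using F5[OF that, of "\<lambda>_. 1"] psum by simp
  have Wbnn: "Wb ab \<ge> 0" for ab unfolding Wb_def using Winn npos by (simp add: sum_nonneg)
  have Qbnn: "Qb b \<ge> 0" for b unfolding Qb_def using Qinn npos by (simp add: sum_nonneg)
  have swapW: "(\<Sum>ab\<in>S. Wb ab * h ab) = (1 / real n) * (\<Sum>i<n. \<Sum>ab\<in>S. Wi i ab * h ab)" for S h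
    unfolding Wb_def by (simp add: sum_distrib_left sum_distrib_right sum.swap[of _ S] mult.assoc)
  have swapQ: "(\<Sum>b\<in>S. Qb b * h b) = (1 / real n) * (\<Sum>i<n. \<Sum>b\<in>S. Qi i b * h b)" for S h
    unfolding Qb_def by (simp add: sum_distrib_left sum_distrib_right sum.swap[of _ S] mult.assoc)
  define D where "D = avg_dist A \<rho> P n C"
  have Wbpmf: "is_pmf_on (A \<times> A) Wb"
  proof -
    have "(\<Sum>ab\<in>A\<times>A. Wb ab) = (\<Sum>ab\<in>A\<times>A. Wb ab * 1)" by simp
    also have "\<dots> = (1 / real n) * (\<Sum>i<n. \<Sum>ab\<in>A\<times>A. Wi i ab * 1)" by (rule swapW)
    also have "\<dots> = (1 / real n) * (\<Sum>i<n. 1)" using F4[of _ "\<lambda>_. 1"] psum by simp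
    also have "\<dots> = 1" using npos by simp
    finally show ?thesis unfolding is_pmf_on_def using Wbnn by simp
  qed
  have Qbpmf: "is_pmf_on A Qb"
  proof -
    have "(\<Sum>b\<in>A. Qb b) = (\<Sum>b\<in>A. Qb b * 1)" by simp
    also have "\<dots> = (1 / real n) * (\<Sum>i<n. \<Sum>b\<in>A. Qi i b * 1)" by (rule swapQ)
    also have "\<dots> = (1 / real n) * (\<Sum>i<n. 1)" using F3 by simp
    also have "\<dots> = 1" using npos by simp
    finally show ?thesis unfolding is_pmf_on_def using Qbnn by simp
  qed
  have marg1: "(\<Sum>b\<in>A. Wb (a, b)) = P a" if "a \<in> A" for a
  proof -
    have "(\<Sum>b\<in>A. Wb (a, b)) = (1 / real n) * (\<Sum>i<n. \<Sum>b\<in>A. Wi i (a, b))"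
      unfolding Wb_def by (simp add: sum_distrib_left sum.swap[of _ A])
    also have "\<dots> = (1 / real n) * (\<Sum>i<n. P a)" using F1 that by simp
    also have "\<dots> = P a" using npos by simp
    finally show ?thesis .
  qed
  have marg2: "(\<Sum>a\<in>A. Wb (a, b)) = Qb b" for b
  proof -
    have "(\<Sum>a\<in>A. Wb (a, b)) = (1 / real n) * (\<Sum>i<n. \<Sum>a\<in>A. Wi i (a, b))"
      unfolding Wb_def by (simp add: sum_distrib_left sum.swap[of _ A])
    also have "\<dots> = Qb b" using F2 unfolding Qb_def by simp
    finally show ?thesis .
  qed
  have distW: "(\<Sum>ab\<in>A\<times>A. Wb ab * \<rho> (fst ab) (snd ab)) = D"
  proof -
    have "(\<Sum>ab\<in>A\<times>A. Wb ab * \<rho> (fst ab) (snd ab))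
        = (1 / real n) * (\<Sum>i<n. \<Sum>x\<in>W. p x * \<rho> (x i) (f x i))"
      using swapW F4 by simp
    also have "\<dots> = (\<Sum>x\<in>W. p x * ((1 / real n) * (\<Sum>i<n. \<rho> (x i) (f x i))))"
      by (simp add: sum_distrib_left sum.swap[of _ W] mult.left_commute)
    also have "\<dots> = (\<Sum>x\<in>W. p x * rho_n_set \<rho> n x C)"
      using f unfolding rho_n_def by (intro sum.cong) auto
    also have "\<dots> = D" unfolding D_def avg_dist_def p_def W_def by simp
    finally show ?thesis .
  qed
  have coup: "Wb \<in> couplings A \<rho> P Qb D"
    unfolding couplings_def using Wbpmf marg1 marg2 distW by simp
  define T where "T = (\<Sum>i<n. (\<Sum>ab\<in>A\<times>A. ent (Wi i ab) (P (fst ab) * Qi i (snd ab)))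
                               + (\<Sum>b\<in>A. Qi i b * ln (M b)))"
  have step4: "rate_fun A \<rho> P M D \<le> ereal (rel_entropy (A \<times> A) Wb (\<lambda>ab. P (fst ab) * Qb (snd ab))
       + (\<Sum>b\<in>A. Qb b * ln (M b)))"
  proof -
    have "rate_fun A \<rho> P M D \<le> I_PQD A \<rho> P Qb D + ereal (\<Sum>b\<in>A. Qb b * ln (M b))"
      unfolding rate_fun_def using Qbpmf by (intro INF_lower) simp
    also have "I_PQD A \<rho> P Qb D \<le> ereal (rel_entropy (A \<times> A) Wb (\<lambda>ab. P (fst ab) * Qb (snd ab)))"
      unfolding I_PQD_def using coup by (intro Inf_lower) simp
    finally show ?thesis by (simp add: add_right_mono)
  qed
  have step5: "rel_entropy (A \<times> A) Wb (\<lambda>ab. P (fst ab) * Qb (snd ab)) + (\<Sum>b\<in>A. Qb b * ln (M b))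
      \<le> (1 / real n) * T"
  proof -
    have re: "rel_entropy (A \<times> A) Wb (\<lambda>ab. P (fst ab) * Qb (snd ab))
        = (\<Sum>ab\<in>A\<times>A. ent (Wb ab) (P (fst ab) * Qb (snd ab)))"
      unfolding rel_entropy_def ent_def by simp
    have pt: "ent (Wb ab) (P (fst ab) * Qb (snd ab))
        \<le> (1 / real n) * (\<Sum>i<n. ent (Wi i ab) (P (fst ab) * Qi i (snd ab)))" if "ab \<in> A \<times> A" for ab
    proof -
      have "ent (Wb ab) (P (fst ab) * Qb (snd ab))
          = ent ((1 / real n) * (\<Sum>i<n. Wi i ab)) ((1 / real n) * (\<Sum>i<n. P (fst ab) * Qi i (snd ab)))"
        unfolding Wb_def Qb_def by (simp add: sum_distrib_left mult.left_commute)
      also have "\<dots> = (1 / real n) * ent (\<Sum>i<n. Wi i ab) (\<Sum>i<n. P (fst ab) * Qi i (snd ab))"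
        using npos by (intro ent_scale) simp
      also have "\<dots> \<le> (1 / real n) * (\<Sum>i<n. ent (Wi i ab) (P (fst ab) * Qi i (snd ab)))"
      proof (rule mult_left_mono)
        have Pa: "P (fst ab) > 0" using that Ppos by auto
        show "ent (\<Sum>i<n. Wi i ab) (\<Sum>i<n. P (fst ab) * Qi i (snd ab))
            \<le> (\<Sum>i<n. ent (Wi i ab) (P (fst ab) * Qi i (snd ab)))"
        proof (rule logsum)
          show "\<forall>i\<in>{..<n}. 0 < Wi i ab \<longrightarrow> 0 < P (fst ab) * Qi i (snd ab)"
            using WQ[of _ "fst ab" "snd ab"] Pa by (auto intro!: mult_pos_pos elim: less_le_trans)
        qed (use Winn Qinn Pa in auto)
      qed (use npos in simp)
      finally show ?thesis .
    qed
    have "rel_entropy (A \<times> A) Wb (\<lambda>ab. P (fst ab) * Qb (snd ab))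
        \<le> (\<Sum>ab\<in>A\<times>A. (1 / real n) * (\<Sum>i<n. ent (Wi i ab) (P (fst ab) * Qi i (snd ab))))"
      unfolding re by (rule sum_mono) (rule pt)
    also have "\<dots> = (1 / real n) * (\<Sum>i<n. \<Sum>ab\<in>A\<times>A. ent (Wi i ab) (P (fst ab) * Qi i (snd ab)))"
      by (simp add: sum_distrib_left sum.swap[of _ "A \<times> A"])
    finally have 1: "rel_entropy (A \<times> A) Wb (\<lambda>ab. P (fst ab) * Qb (snd ab))
        \<le> (1 / real n) * (\<Sum>i<n. \<Sum>ab\<in>A\<times>A. ent (Wi i ab) (P (fst ab) * Qi i (snd ab)))" .
    have 2: "(\<Sum>b\<in>A. Qb b * ln (M b)) = (1 / real n) * (\<Sum>i<n. \<Sum>b\<in>A. Qi i b * ln (M b))"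
      by (rule swapQ)
    show ?thesis using 1 2 unfolding T_def by (simp add: sum.distrib distrib_left)
  qed
  have Wpos: "Wi i (x i, f x i) > 0" if "x \<in> W" for x i
  proof -
    have "p x \<le> Wi i (x i, f x i)" unfolding Wi_def
      by (rule member_le_sum) (use that pnn fW in auto)
    then show ?thesis using ppos[OF that] by simp
  qed
  have Qpos: "Qi i (f x i) > 0" if "x \<in> W" for x i using Wpos[OF that, of i] WQ[of i "x i" "f x i"] by simp
  define G where "G x = (\<Prod>i<n. Wi i (x i, f x i) * M (f x i) / Qi i (f x i))" for x
  have Gpos: "G x > 0" if "x \<in> W" for x unfolding G_def
    using Wpos[OF that] Qpos[OF that] Mpos fA' by (intro prod_pos) (auto intro!: divide_pos_pos mult_pos_pos)
  have Teq: "T = (\<Sum>x\<in>W. p x * ln (G x / p x))"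
  proof -
    have "T = (\<Sum>i<n. (\<Sum>x\<in>W. p x * ln (Wi i (x i, f x i) / (P (x i) * Qi i (f x i))))
                  + (\<Sum>x\<in>W. p x * ln (M (f x i))))"
      unfolding T_def ent_eq
    proof (intro sum.cong refl arg_cong2[where f="(+)"])
      fix i assume "i \<in> {..<n}"
      then have i: "i < n" by simp
      show "(\<Sum>ab\<in>A \<times> A. Wi i ab * ln (Wi i ab / (P (fst ab) * Qi i (snd ab))))
          = (\<Sum>x\<in>W. p x * ln (Wi i (x i, f x i) / (P (x i) * Qi i (f x i))))"
        using F4[OF i, of "\<lambda>ab. ln (Wi i ab / (P (fst ab) * Qi i (snd ab)))"] by simp
      show "(\<Sum>b\<in>A. Qi i b * ln (M b)) = (\<Sum>x\<in>W. p x * ln (M (f x i)))"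
        using F5[OF i, of "\<lambda>b. ln (M b)"] by simp
    qed
    also have "\<dots> = (\<Sum>x\<in>W. p x * (\<Sum>i<n. ln (Wi i (x i, f x i) / (P (x i) * Qi i (f x i))) + ln (M (f x i))))"
      by (simp add: sum.distrib[symmetric] sum_distrib_left sum.swap[of _ W] distrib_left)
    also have "\<dots> = (\<Sum>x\<in>W. p x * ln (G x / p x))"
    proof (intro sum.cong refl arg_cong2[where f="(*)"])
      fix x assume x: "x \<in> W"
      have "G x / p x = (\<Prod>i<n. (Wi i (x i, f x i) / (P (x i) * Qi i (f x i))) * M (f x i))"
        unfolding G_def p_def prod_n_def prod_dividef[symmetric] by (intro prod.cong) (auto simp: field_simps)
      also have "ln \<dots> = (\<Sum>i<n. ln ((Wi i (x i, f x i) / (P (x i) * Qi i (f x i))) * M (f x i)))"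
        using Wpos[OF x] Qpos[OF x] Mpos fA' Ppos Wi_mem[OF x] by (intro ln_prod) (simp, (auto; metis less_irrefl))
      also have "\<dots> = (\<Sum>i<n. ln (Wi i (x i, f x i) / (P (x i) * Qi i (f x i))) + ln (M (f x i)))"
      proof (intro sum.cong refl)
        fix i assume "i \<in> {..<n}"
        then have i: "i < n" by simp
        show "ln ((Wi i (x i, f x i) / (P (x i) * Qi i (f x i))) * M (f x i))
            = ln (Wi i (x i, f x i) / (P (x i) * Qi i (f x i))) + ln (M (f x i))"
          by (rule ln_mult_pos) (use Wpos[OF x] Qpos[OF x] Mpos fA' Ppos Wi_mem[OF x] i in \<open>auto intro!: divide_pos_pos mult_pos_pos\<close>)
      qed
      finally show "(\<Sum>i<n. ln (Wi i (x i, f x i) / (P (x i) * Qi i (f x i))) + ln (M (f x i))) = ln (G x / p x)" by simp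
    qed
    finally show ?thesis .
  qed
  have Wne: "W \<noteq> {}" using CW assms(9) by auto
  have SGpos: "(\<Sum>x\<in>W. G x) > 0" using Gpos fW Wne by (intro sum_pos) auto
  have step6a: "T \<le> ln (\<Sum>x\<in>W. G x)"
  proof -
    have "ent (\<Sum>x\<in>W. p x) (\<Sum>x\<in>W. G x) \<le> (\<Sum>x\<in>W. ent (p x) (G x))"
      using fW pnn Gpos by (intro logsum) (auto simp: less_imp_le)
    also have "(\<Sum>x\<in>W. ent (p x) (G x)) = - T" unfolding Teq ent_eq
      using ppos Gpos by (simp add: sum_negf[symmetric] ln_div) (intro sum.cong refl, auto simp: algebra_simps less_le)
    finally show ?thesis using psum SGpos by (simp add: ent_def ln_div)
  qed
  have step6b: "(\<Sum>x\<in>W. G x) \<le> mass_n M n C"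
  proof -
    have fWC: "f ` W \<subseteq> C" using f by auto
    have "(\<Sum>x\<in>W. G x) = (\<Sum>y\<in>C. \<Sum>x\<in>{x. x \<in> W \<and> f x = y}. G x)"
      using sum.group[OF fW fC fWC, of G] by simp
    also have "\<dots> \<le> (\<Sum>y\<in>C. prod_n M n y)"
    proof (rule sum_mono)
      fix y assume y: "y \<in> C"
      have yA: "y i \<in> A" if "i < n" for i using y CW Wi_mem that by blast
      define K where "K x = (\<Prod>i<n. Wi i (x i, y i) / Qi i (y i))" for x
      have Mny: "prod_n M n y \<ge> 0" unfolding prod_n_def using Mpos yA by (intro prod_nonneg) (auto simp: less_imp_le)
      have Knn: "K x \<ge> 0" for x unfolding K_def using Winn Qinn by (intro prod_nonneg) auto
      have "(\<Sum>x\<in>{x. x \<in> W \<and> f x = y}. G x) = (\<Sum>x\<in>{x. x \<in> W \<and> f x = y}. prod_n M n y * K x)"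
        unfolding G_def K_def prod_n_def
        by (intro sum.cong refl) (auto simp: prod.distrib[symmetric] intro!: prod.cong)
      also have "\<dots> \<le> (\<Sum>x\<in>W. prod_n M n y * K x)"
        using fW Knn Mny by (intro sum_mono2) auto
      also have "\<dots> = prod_n M n y * (\<Sum>x\<in>W. K x)" by (simp add: sum_distrib_left)
      also have "\<dots> \<le> prod_n M n y * 1"
      proof (rule mult_left_mono[OF _ Mny])
        have "(\<Sum>x\<in>W. K x) = (\<Prod>i<n. \<Sum>a\<in>A. Wi i (a, y i) / Qi i (y i))"
          unfolding K_def W_def by (rule sum_words_prod[OF fA])
        also have "\<dots> = (\<Prod>i<n. Qi i (y i) / Qi i (y i))"
          using F2 by (intro prod.cong refl) (simp add: sum_divide_distrib[symmetric])
        also have "\<dots> \<le> 1" using Qinn by (intro prod_le_1) auto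
        finally show "(\<Sum>x\<in>W. K x) \<le> 1" .
      qed
      finally show "(\<Sum>x\<in>{x. x \<in> W \<and> f x = y}. G x) \<le> prod_n M n y" by simp
    qed
    also have "\<dots> = mass_n M n C" unfolding mass_n_def by simp
    finally show ?thesis .
  qed
  have "T \<le> ln (mass_n M n C)"
    using step6a step6b SGpos by (meson ln_le_cancel_iff order_trans order_less_le_trans)
  then have "(1 / real n) * T \<le> (1 / real n) * ln (mass_n M n C)"
    using npos by (intro mult_left_mono) auto
  then show ?thesis using step4 step5 unfolding D_def by (meson ereal_less_eq(3) order_trans)
qed

end
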